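(* In the truncated sparse linear regression model of the context, assume (A1) survival probability, (A2) minimum eigenvalue and (A4) normalization. Then there exists $\kappa\ge\Omega(\alpha^4\sigma_{\min})>0$ (with an absolute implied constant) such that $\nabla^2 l_n^K(\vec{\omega})\succeq\kappa I$ for all $\vec{\omega}\in\mathbb{R}^k$ with $\|\vec{\omega}-\vec{\Omega}^*_K\|_2\le\frac{1}{C\sqrt k}$.
   Context: $S\subseteq\mathbb{R}$ measurable with indicator $S(\cdot)$. Fixed row vectors $\vec{x}^{(1)},\dots,\vec{x}^{(n)}\in\mathbb{R}^d$ form the rows of $\vec{X}\in\mathbb{R}^{n\times d}$. $\vec{\Omega}^*\in\mathbb{R}^d$ has support $K$, $|K|=k$; $\vec{\Omega}^*_K\in\mathbb{R}^k$ is its restriction to $K$, $\vec{x}^{(i)}_K$ the restriction of $\vec{x}^{(i)}$, and $\vec{X}_K$ the columns of $\vec{X}$ indexed by $K$. Responses $y^{(i)}$ are independent, $y^{(i)}\sim\mathcal{N}(\vec{x}^{(i)}\vec{\Omega}^*,1)$ conditioned on $S$. $l_n(\vec{\Omega})=\frac1n\sum_{i=1}^n\left(\frac12{y^{(i)}}^2-y^{(i)}\vec{x}^{(i)}\vec{\Omega}+\log\int\exp\left(-\frac12z^2+z\,\vec{x}^{(i)}\vec{\Omega}\right)S(z)dz\right)$, and $l_n^K(\vec{\omega})=l_n(\vec{\Omega})$ where $\vec{\Omega}\in\mathbb{R}^d$ equals $\vec{\omega}$ on $K$ and $0$ off $K$. $\alpha(\vec{\Omega},\vec{x})=\Pr_{y\sim\mathcal{N}(\vec{x}\vec{\Omega},1)}[y\in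 S]$. (A1): $\alpha(\vec{\Omega}^*,\vec{x}^{(i)})\ge\alpha>0$ for all $i$; (A2): $\frac1n\vec{X}_K^\top\vec{X}_K\succeq\sigma_{\min}I$, $\sigma_{\min}>0$; (A4): $\max_{i,j}|X_{ij}|\le C$. *)

theory Defs
  imports "HOL-Probability.Probability"
begin

text \<open>Explicit-carrier encoding: samples are indexed by i < n, features by j < d,
  and vectors of R^k by i < k (as functions nat => real; coordinates >= k are ignored).
  This allows the constant to be absolute, i.e. quantified outside of n, d, k.\<close>

definition Kidx :: "nat set \<Rightarrow> nat \<Rightarrow> nat" where
  "Kidx K i = sorted_list_of_set K ! i"

definition row_ip :: "(nat \<Rightarrow> nat \<Rightarrow> real) \<Rightarrow> nat \<Rightarrow> nat \<Rightarrow> (nat \<Rightarrow> real) \<Rightarrow> real" where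
  "row_ip X d i \<Omega> = (\<Sum>j<d. X i j * \<Omega> j)"

definition surv_prob :: "real set \<Rightarrow> real \<Rightarrow> real" where
  "surv_prob S \<mu> = measure (density lborel (normal_density \<mu> 1)) S"

definition trunc_nll :: "real set \<Rightarrow> nat \<Rightarrow> nat \<Rightarrow> (nat \<Rightarrow> nat \<Rightarrow> real) \<Rightarrow> (nat \<Rightarrow> real)
     \<Rightarrow> (nat \<Rightarrow> real) \<Rightarrow> real" where
  "trunc_nll S n d X y \<Omega> = (1 / real n) * (\<Sum>i<n.
      (1/2) * (y i)\<^sup>2 - y i * row_ip X d i \<Omega>
      + ln (LINT z|lborel. indicator S z * exp (- (1/2) * z\<^sup>2 + z * row_ip X d i \<Omega>)))"

definition extK :: "nat set \<Rightarrow> (nat \<Rightarrow> real) \<Rightarrow> nat \<Rightarrow> real" where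
  "extK K \<omega> = (\<lambda>j. \<Sum>i<card K. if Kidx K i = j then \<omega> i else 0)"

definition trunc_nll_K :: "real set \<Rightarrow> nat \<Rightarrow> nat \<Rightarrow> nat set \<Rightarrow> (nat \<Rightarrow> nat \<Rightarrow> real)
     \<Rightarrow> (nat \<Rightarrow> real) \<Rightarrow> (nat \<Rightarrow> real) \<Rightarrow> real" where
  "trunc_nll_K S n d K X y \<omega> = trunc_nll S n d X y (extK K \<omega>)"

definition has_partial :: "((nat \<Rightarrow> real) \<Rightarrow> real) \<Rightarrow> nat \<Rightarrow> (nat \<Rightarrow> real) \<Rightarrow> real \<Rightarrow> bool" where
  "has_partial f i w D \<longleftrightarrow> ((\<lambda>t. f (w(i := t))) has_real_derivative D) (at (w i))"

definition is_hessian :: "((nat \<Rightarrow> real) \<Rightarrow> real) \<Rightarrow> nat \<Rightarrow> (nat \<Rightarrow> real) \<Rightarrow> (nat \<Rightarrow> nat \<Rightarrow> real) \<Rightarrow> bool" where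
  "is_hessian f k w H \<longleftrightarrow> (\<exists>g. (\<forall>u i. i < k \<longrightarrow> has_partial f i u (g i u)) \<and>
       (\<forall>i j. i < k \<longrightarrow> j < k \<longrightarrow> has_partial (g i) j w (H i j)))"

end

theory Submission
  imports Defs
begin

lemma deriv_integral:
  fixes f f' :: "real \<Rightarrow> real \<Rightarrow> real" and G :: "real \<Rightarrow> real" and m :: real
  assumes int: "\<And>t. integrable lborel (\<lambda>z. f t z)"
  and der: "\<And>z t. ((\<lambda>t. f t z) has_real_derivative f' t z) (at t)"
  and meas: "(\<lambda>z. f' m z) \<in> borel_measurable lborel"
  and G: "integrable lborel G"
  and bnd: "\<And>z t. \<bar>t - m\<bar> \<le> 1 \<Longrightarrow> \<bar>f' t z\<bar> \<le> G z"
  shows "((\<lambda>t. LINT z|lborel. f t z) has_real_derivative (LINT z|lborel. f' m z)) (at m)"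
  unfolding has_field_derivative_iff tendsto_at_iff_sequentially
proof (intro allI impI)
  fix X :: "nat \<Rightarrow> real"
  assume X: "\<forall>i. X i \<in> UNIV - {m}" and lim: "X \<longlonglongrightarrow> m"
  from lim have "\<forall>\<^sub>F i in sequentially. dist (X i) m < 1"
    by (simp add: tendsto_iff)
  then obtain N where N: "\<And>n. n \<ge> N \<Longrightarrow> \<bar>X n - m\<bar> < 1"
    by (auto simp: eventually_sequentially dist_real_def)
  define s where "s n z = (f (X (n+N)) z - f m z) / (X (n+N) - m)" for n z
  have eq: "((LINT z|lborel. f (X (n+N)) z) - (LINT z|lborel. f m z)) / (X (n+N) - m)
      = (LINT z|lborel. s n z)" for n
    unfolding s_def using int by (simp add: integral_diff)
  have bound: "\<bar>s n z\<bar> \<le> G z" for n z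
  proof -
    let ?x = "X (n+N)"
    have xm: "?x \<noteq> m" using X by auto
    have d1: "\<bar>?x - m\<bar> < 1" using N by auto
    have "\<exists>\<xi>. \<bar>\<xi> - m\<bar> \<le> 1 \<and> f ?x z - f m z = (?x - m) * f' \<xi> z"
    proof (cases "?x < m")
      case True
      from MVT2[OF True, of "\<lambda>t. f t z" "\<lambda>t. f' t z"] der
      obtain \<xi> where "?x < \<xi>" "\<xi> < m" "f m z - f ?x z = (m - ?x) * f' \<xi> z" by blast
      then show ?thesis using d1 by (intro exI[of _ \<xi>]) (auto simp: algebra_simps)
    next
      case False
      then have "m < ?x" using xm by auto
      from MVT2[OF this, of "\<lambda>t. f t z" "\<lambda>t. f' t z"] der
      obtain \<xi> where "m < \<xi>" "\<xi> < ?x" "f ?x z - f m z = (?x - m) * f' \<xi> z" by blast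
      then show ?thesis using d1 by (intro exI[of _ \<xi>]) (auto simp: algebra_simps)
    qed
    then obtain \<xi> where "\<bar>\<xi> - m\<bar> \<le> 1" "f ?x z - f m z = (?x - m) * f' \<xi> z" by blast
    then have "s n z = f' \<xi> z" unfolding s_def using xm by simp
    then show ?thesis using bnd[OF \<open>\<bar>\<xi> - m\<bar> \<le> 1\<close>] by simp
  qed
  have "(\<lambda>n. LINT z|lborel. s n z) \<longlonglongrightarrow> (LINT z|lborel. f' m z)"
  proof (rule integral_dominated_convergence[where w=G])
    show "(\<lambda>z. f' m z) \<in> borel_measurable lborel" by (rule meas)
    show "(\<lambda>z. s n z) \<in> borel_measurable lborel" for n
      unfolding s_def using int by (intro borel_measurable_divide borel_measurable_diff) auto
    show "integrable lborel G" by (rule G)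
    show "AE z in lborel. norm (s n z) \<le> G z" for n using bound by auto
    show "AE z in lborel. (\<lambda>n. s n z) \<longlonglongrightarrow> f' m z"
    proof (intro AE_I2)
      fix z
      have "((\<lambda>y. (f y z - f m z) / (y - m)) \<longlongrightarrow> f' m z) (at m)"
        using der[of z m] unfolding has_field_derivative_iff .
      then have "\<forall>Y. (\<forall>i. Y i \<in> UNIV - {m}) \<longrightarrow> Y \<longlonglongrightarrow> m \<longrightarrow>
          ((\<lambda>y. (f y z - f m z) / (y - m)) \<circ> Y) \<longlonglongrightarrow> f' m z"
        unfolding tendsto_at_iff_sequentially .
      moreover have "(\<lambda>n. X (n+N)) \<longlonglongrightarrow> m" using LIMSEQ_ignore_initial_segment[OF lim] .
      ultimately show "(\<lambda>n. s n z) \<longlonglongrightarrow> f' m z"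
        using X unfolding s_def by (auto simp: o_def)
    qed
  qed
  then have "(\<lambda>n. ((LINT z|lborel. f (X (n+N)) z) - (LINT z|lborel. f m z)) / (X (n+N) - m))
     \<longlonglongrightarrow> (LINT z|lborel. f' m z)" using eq by simp
  then show "((\<lambda>y. ((LINT z|lborel. f y z) - (LINT z|lborel. f m z)) / (y - m)) \<circ> X)
     \<longlonglongrightarrow> (LINT z|lborel. f' m z)"
    unfolding o_def by (rule LIMSEQ_offset)
qed

definition gw :: "real \<Rightarrow> real \<Rightarrow> real" where
  "gw a z = exp (- (1/2) * z\<^sup>2 + z * a)"

lemma gw_pos: "gw a z > 0" by (simp add: gw_def)

lemma gw_normal: "gw a z = sqrt (2*pi) * exp (a\<^sup>2/2) * normal_density a 1 z"
proof -
  have "sqrt (2*pi) * exp (a\<^sup>2/2) * normal_density a 1 z = exp (a\<^sup>2/2) * exp (-(z-a)\<^sup>2/2)"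
    by (simp add: normal_density_def)
  also have "\<dots> = exp (a\<^sup>2/2 + (-(z-a)\<^sup>2/2))" by (rule exp_add[symmetric])
  also have "a\<^sup>2/2 + (-(z-a)\<^sup>2/2) = - (1/2) * z\<^sup>2 + z * a" by (simp add: power2_eq_square field_simps)
  finally show ?thesis by (simp add: gw_def)
qed

lemma gw_meas[measurable]: "(\<lambda>z. gw a z) \<in> borel_measurable borel"
  unfolding gw_def by measurable

lemma integrable_gw: "integrable lborel (\<lambda>z. gw a z)"
  unfolding gw_normal by (auto intro!: integrable_mult_right)

lemma integral_gw: "(LINT z|lborel. gw a z) = sqrt (2*pi) * exp (a\<^sup>2/2)"
proof -
  have "(LINT z|lborel. gw a z) = sqrt (2*pi) * exp (a\<^sup>2/2) * (LINT z|lborel. normal_density a 1 z)"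
    unfolding gw_normal by (rule integral_mult_right_zero)
  then show ?thesis using integral_normal_density[of a 1] by simp
qed

lemma gw_le: "gw m z \<le> exp (m\<^sup>2/2)"
proof -
  have "- (1/2) * z\<^sup>2 + z * m \<le> m\<^sup>2/2"
  proof -
    have "(z-m)\<^sup>2 = z\<^sup>2 - 2*z*m + m\<^sup>2" by (simp add: power2_eq_square algebra_simps)
    then show ?thesis using zero_le_power2[of "z-m"] by linarith
  qed
  then show ?thesis unfolding gw_def by simp
qed

lemma exp_abs_gw: "exp \<bar>z\<bar> * gw a z \<le> gw (a+1) z + gw (a-1) z"
proof (cases "z \<ge> 0")
  case True
  then have "exp \<bar>z\<bar> * gw a z = gw (a+1) z"
    unfolding gw_def mult_exp_exp by (simp add: algebra_simps)
  then show ?thesis using gw_pos[of "a-1" z] by simp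
next
  case False
  then have "exp \<bar>z\<bar> * gw a z = gw (a-1) z"
    unfolding gw_def mult_exp_exp by (simp add: algebra_simps)
  then show ?thesis using gw_pos[of "a+1" z] by simp
qed

lemma gw_shift: assumes "\<bar>t - m\<bar> \<le> 1" shows "gw t z \<le> gw (m+1) z + gw (m-1) z"
proof -
  have "z * t \<le> z * m + \<bar>z\<bar>"
  proof -
    have "z * (t - m) \<le> \<bar>z * (t - m)\<bar>" by simp
    also have "\<dots> \<le> \<bar>z\<bar>" using assms by (simp add: abs_mult mult_left_le)
    finally show ?thesis by (simp add: algebra_simps)
  qed
  then have "gw t z \<le> exp \<bar>z\<bar> * gw m z"
    by (simp add: gw_def mult_exp_exp)
  then show ?thesis using exp_abs_gw[of z m] by simp
qed

lemma pow_le_exp: assumes "x \<ge> 0" shows "x ^ p \<le> (real p + 1) ^ p * exp x"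
proof -
  let ?q = "real p + 1"
  have "x / ?q \<le> exp (x / ?q)" using exp_ge_add_one_self[of "x/?q"] by linarith
  then have "(x / ?q) ^ p \<le> exp (x / ?q) ^ p" using assms by (intro power_mono) auto
  also have "\<dots> = exp (real p * (x / ?q))" by (rule exp_of_nat_mult[symmetric])
  also have "\<dots> \<le> exp x"
  proof -
    have "real p * (x / ?q) \<le> x" using assms by (simp add: field_simps)
    then show ?thesis by simp
  qed
  finally have "(x / ?q) ^ p \<le> exp x" .
  then have "x ^ p / ?q ^ p \<le> exp x" by (simp add: power_divide)
  then show ?thesis by (simp add: field_simps)
qed

lemma integrable_moment: "integrable lborel (\<lambda>z. \<bar>z\<bar> ^ p * gw a z)"
proof (rule Bochner_Integration.integrable_bound)
  show "integrable lborel (\<lambda>z. (real p + 1) ^ p * (gw (a+1) z + gw (a-1) z))"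
    by (intro integrable_mult_right Bochner_Integration.integrable_add integrable_gw)
  show "(\<lambda>z. \<bar>z\<bar> ^ p * gw a z) \<in> borel_measurable lborel" by measurable
  show "AE z in lborel. norm (\<bar>z\<bar> ^ p * gw a z) \<le> norm ((real p + 1) ^ p * (gw (a+1) z + gw (a-1) z))"
  proof (intro AE_I2)
    fix z
    have "\<bar>z\<bar> ^ p * gw a z \<le> (real p + 1) ^ p * exp \<bar>z\<bar> * gw a z"
      using pow_le_exp[of "\<bar>z\<bar>" p] gw_pos[of a z] by (intro mult_right_mono) auto
    also have "\<dots> \<le> (real p + 1) ^ p * (gw (a+1) z + gw (a-1) z)"
      using exp_abs_gw[of z a] by (simp add: mult.assoc)
    finally show "norm (\<bar>z\<bar> ^ p * gw a z) \<le> norm ((real p + 1) ^ p * (gw (a+1) z + gw (a-1) z))"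
      using gw_pos[of a z] gw_pos[of "a+1" z] gw_pos[of "a-1" z] by simp
  qed
qed

definition FF :: "real set \<Rightarrow> nat \<Rightarrow> real \<Rightarrow> real" where
  "FF S j m = (LINT z|lborel. indicator S z * z ^ j * gw m z)"

lemma integrable_FF:
  assumes S: "S \<in> sets borel"
  shows "integrable lborel (\<lambda>z. indicator S z * z ^ j * gw m z)"
proof (rule Bochner_Integration.integrable_bound)
  show "integrable lborel (\<lambda>z. \<bar>z\<bar> ^ j * gw m z)" by (rule integrable_moment)
  show "(\<lambda>z. indicator S z * z ^ j * gw m z) \<in> borel_measurable lborel" using S by measurable
  show "AE z in lborel. norm (indicator S z * z ^ j * gw m z) \<le> norm (\<bar>z\<bar> ^ j * gw m z)"
    using gw_pos[of m] by (intro AE_I2) (auto simp: indicator_def abs_mult power_abs)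
qed

lemma deriv_FF:
  assumes S: "S \<in> sets borel"
  shows "(FF S j has_real_derivative FF S (Suc j) m) (at m)"
proof -
  have "((\<lambda>t. LINT z|lborel. indicator S z * z ^ j * gw t z) has_real_derivative
        (LINT z|lborel. indicator S z * z ^ Suc j * gw m z)) (at m)"
  proof (rule deriv_integral[where G="\<lambda>z. \<bar>z\<bar> ^ Suc j * (gw (m+1) z + gw (m-1) z)"])
    show "integrable lborel (\<lambda>z. indicator S z * z ^ j * gw t z)" for t
      using integrable_FF[OF S] .
    show "((\<lambda>t. indicator S z * z ^ j * gw t z) has_real_derivative
       indicator S z * z ^ Suc j * gw t z) (at t)" for z t
      unfolding gw_def by (auto intro!: derivative_eq_intros simp: algebra_simps)
    show "(\<lambda>z. indicator S z * z ^ Suc j * gw m z) \<in> borel_measurable lborel" using S by measurable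
    show "integrable lborel (\<lambda>z. \<bar>z\<bar> ^ Suc j * (gw (m+1) z + gw (m-1) z))"
      unfolding distrib_left by (intro Bochner_Integration.integrable_add integrable_moment)
    show "\<bar>indicator S z * z ^ Suc j * gw t z\<bar> \<le> \<bar>z\<bar> ^ Suc j * (gw (m + 1) z + gw (m - 1) z)"
      if "\<bar>t - m\<bar> \<le> 1" for z t
    proof -
      have "\<bar>indicator S z * z ^ Suc j * gw t z\<bar> \<le> \<bar>z\<bar> ^ Suc j * gw t z"
        using gw_pos[of t z] by (auto simp: indicator_def abs_mult power_abs)
      also have "\<dots> \<le> \<bar>z\<bar> ^ Suc j * (gw (m + 1) z + gw (m - 1) z)"
        using gw_shift[OF that] by (intro mult_left_mono) auto
      finally show ?thesis .
    qed
  qed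
  then show ?thesis unfolding FF_def[abs_def] .
qed

lemma FF0: "FF S 0 m = (LINT z|lborel. indicator S z * gw m z)"
  unfolding FF_def by simp

lemma integrable_FF0:
  assumes S: "S \<in> sets borel"
  shows "integrable lborel (\<lambda>z. indicator S z * gw m z)"
  using integrable_FF[OF S, of 0 m] by simp

lemma surv_FF:
  assumes S: "S \<in> sets borel"
  shows "surv_prob S \<mu> = FF S 0 \<mu> / (sqrt (2*pi) * exp (\<mu>\<^sup>2/2))"
proof -
  let ?c = "sqrt (2*pi) * exp (\<mu>\<^sup>2/2)"
  have c: "?c > 0" by simp
  have nd: "normal_density \<mu> 1 z = gw \<mu> z / ?c" for z
    using c unfolding gw_normal by simp
  have int: "integrable lborel (\<lambda>z. indicator S z * normal_density \<mu> 1 z)"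
    unfolding nd using integrable_divide_zero[OF integrable_FF0[OF S, of \<mu>], of ?c]
    by simp
  have "emeasure (density lborel (normal_density \<mu> 1)) S
      = (\<integral>\<^sup>+ z. ennreal (indicator S z * normal_density \<mu> 1 z) \<partial>lborel)"
    using S by (subst emeasure_density) (auto intro!: nn_integral_cong simp: indicator_def)
  also have "\<dots> = ennreal (LINT z|lborel. indicator S z * normal_density \<mu> 1 z)"
    using int by (intro nn_integral_eq_integral) auto
  finally have "surv_prob S \<mu> = (LINT z|lborel. indicator S z * normal_density \<mu> 1 z)"
    unfolding surv_prob_def measure_def
    by (simp add: integral_nonneg_AE)
  also have "\<dots> = (LINT z|lborel. indicator S z * gw \<mu> z / ?c)"
    unfolding nd by simp
  also have "\<dots> = FF S 0 \<mu> / ?c" unfolding FF0 by (rule integral_divide_zero)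
  finally show ?thesis .
qed

lemma gw_sq: "(gw \<mu> z)\<^sup>2 = gw m z * gw (2*\<mu> - m) z"
proof -
  have "(gw \<mu> z)\<^sup>2 = exp (2 * (- (1/2) * z\<^sup>2 + z * \<mu>))"
    unfolding gw_def power2_eq_square mult_exp_exp by simp
  also have "\<dots> = exp ((- (1/2) * z\<^sup>2 + z * m) + (- (1/2) * z\<^sup>2 + z * (2*\<mu> - m)))"
    by (simp add: algebra_simps)
  also have "\<dots> = gw m z * gw (2*\<mu> - m) z" unfolding gw_def by (rule exp_add)
  finally show ?thesis .
qed

lemma amgm_pt:
  assumes t: "t > 0"
  shows "gw \<mu> z \<le> (t * gw m z + gw (2*\<mu> - m) z / t) / 2"
proof -
  let ?g = "gw \<mu> z" and ?A = "gw m z" and ?B = "gw (2*\<mu> - m) z"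
  have A: "?A > 0" by (rule gw_pos)
  have "t * ?A * (t * ?A + ?B / t - 2 * ?g) = (t * ?A - ?g)\<^sup>2"
    using gw_sq[of \<mu> z m] t by (simp add: power2_eq_square field_simps)
  also have "\<dots> \<ge> 0" by simp
  finally have "t * ?A * (t * ?A + ?B / t - 2 * ?g) \<ge> 0" .
  moreover have "t * ?A > 0" using t A by simp
  ultimately have "t * ?A + ?B / t - 2 * ?g \<ge> 0"
    by (simp add: zero_le_mult_iff)
  then show ?thesis by simp
qed

lemma FF0_le: assumes S: "S \<in> sets borel" shows "FF S 0 a \<le> sqrt (2*pi) * exp (a\<^sup>2/2)"
proof -
  have "FF S 0 a \<le> (LINT z|lborel. gw a z)"
    unfolding FF0 using integrable_FF0[OF S] integrable_gw gw_pos
    by (intro integral_mono) (auto simp: indicator_def less_imp_le)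
  then show ?thesis using integral_gw by simp
qed

lemma FF0_lower:
  assumes S: "S \<in> sets borel" and A: "FF S 0 \<mu> > 0"
  shows "FF S 0 m \<ge> (FF S 0 \<mu>)\<^sup>2 / (sqrt (2*pi) * exp ((2*\<mu> - m)\<^sup>2/2))"
proof -
  let ?A = "FF S 0 \<mu>" and ?N = "sqrt (2*pi) * exp ((2*\<mu> - m)\<^sup>2/2)"
  define t where "t = ?N / ?A"
  have N: "?N > 0" by simp
  have t: "t > 0" unfolding t_def using N A by simp
  have "?A \<le> (LINT z|lborel. (t * (indicator S z * gw m z) + (indicator S z * gw (2*\<mu> - m) z) / t) / 2)"
    unfolding FF0
  proof (rule integral_mono)
    show "integrable lborel (\<lambda>z. indicat_real S z * gw \<mu> z)" by (rule integrable_FF0[OF S])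
    show "integrable lborel (\<lambda>z. (t * (indicator S z * gw m z) + (indicator S z * gw (2*\<mu> - m) z) / t) / 2)"
      using integrable_FF0[OF S] by auto
    show "indicat_real S z * gw \<mu> z \<le> (t * (indicator S z * gw m z) + (indicator S z * gw (2*\<mu> - m) z) / t) / 2" for z
      using amgm_pt[OF t, of \<mu> z m] by (auto simp: indicator_def)
  qed
  also have "\<dots> = (t * FF S 0 m + FF S 0 (2*\<mu> - m) / t) / 2"
    unfolding FF0 using integrable_FF0[OF S]
    by (simp add: integral_mult_right_zero)
  also have "\<dots> \<le> (t * FF S 0 m + ?N / t) / 2"
    using FF0_le[OF S, of "2*\<mu> - m"] t by (simp add: divide_right_mono)
  also have "?N / t = ?A" unfolding t_def using N A by simp
  finally have "?A \<le> (t * FF S 0 m + ?A) / 2" .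
  then have "?A \<le> t * FF S 0 m" by simp
  then have "?A * ?A \<le> ?N * FF S 0 m" unfolding t_def using A by (simp add: field_simps)
  then show ?thesis using N by (simp add: power2_eq_square field_simps)
qed

lemma var_lower:
  assumes S: "S \<in> sets borel" and F0: "FF S 0 m > 0"
  shows "FF S 2 m / FF S 0 m - (FF S 1 m / FF S 0 m)\<^sup>2 \<ge> (FF S 0 m)\<^sup>2 / (32 * (exp (m\<^sup>2/2))\<^sup>2)"
proof -
  define F0 F1 F2 where "F0 = FF S 0 m" and "F1 = FF S 1 m" and "F2 = FF S 2 m"
  define B where "B = exp (m\<^sup>2/2)"
  define c where "c = F1 / F0"
  define r where "r = F0 / (4 * B)"
  have Bp: "B > 0" unfolding B_def by simp
  have F0p: "F0 > 0" using F0 unfolding F0_def .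
  have rp: "r > 0" unfolding r_def using Bp F0p by simp
  let ?f = "\<lambda>j z. indicator S z * z ^ j * gw m z"
  have I: "integrable lborel (?f j)" for j using integrable_FF[OF S] .
  have I0: "integrable lborel (\<lambda>z. indicator S z * gw m z)" using I[of 0] by simp
  have I1: "integrable lborel (\<lambda>z. indicator S z * z * gw m z)" using I[of 1] by simp
  have I2: "integrable lborel (\<lambda>z. indicator S z * z\<^sup>2 * gw m z)" using I[of 2] by simp
  have ind: "integrable lborel (\<lambda>z. indicator {c-r..c+r} z :: real)"
    by (simp add: integrable_indicator_iff emeasure_lborel_Icc_eq)
  have eq1: "(LINT z|lborel. indicator S z * (z - c)\<^sup>2 * gw m z) = F2 - 2*c*F1 + c\<^sup>2 * F0"
  proof -
    have "(\<lambda>z. indicator S z * (z - c)\<^sup>2 * gw m z) = (\<lambda>z. (?f 2 z - (2*c) * ?f 1 z) + c\<^sup>2 * ?f 0 z)"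
      by (auto simp: fun_eq_iff power2_eq_square algebra_simps)
    then have "(LINT z|lborel. indicator S z * (z - c)\<^sup>2 * gw m z)
       = (LINT z|lborel. (?f 2 z - (2*c) * ?f 1 z) + c\<^sup>2 * ?f 0 z)" by simp
    also have "\<dots> = F2 - 2*c*F1 + c\<^sup>2 * F0"
      unfolding F0_def F1_def F2_def FF_def using I0 I1 I2
      by (simp add: Bochner_Integration.integral_add Bochner_Integration.integral_diff)
    finally show ?thesis .
  qed
  have eq2: "(LINT z|lborel. r\<^sup>2 * ?f 0 z - (r\<^sup>2 * B) * indicator {c-r..c+r} z) = r\<^sup>2 * F0 - r\<^sup>2 * B * (2*r)"
  proof -
    have "(LINT z|lborel. r\<^sup>2 * ?f 0 z - (r\<^sup>2 * B) * indicator {c-r..c+r} z)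
        = r\<^sup>2 * F0 - (r\<^sup>2 * B) * (LINT z|lborel. indicator {c-r..c+r} z)"
      unfolding F0_def FF_def using I0 ind
      by (simp add: Bochner_Integration.integral_diff)
    also have "(LINT z|lborel. indicator {c-r..c+r} z) = 2*r"
      using rp by simp
    finally show ?thesis by simp
  qed
  have "r\<^sup>2 * F0 - r\<^sup>2 * B * (2*r) \<le> F2 - 2*c*F1 + c\<^sup>2 * F0"
    unfolding eq1[symmetric] eq2[symmetric]
  proof (rule integral_mono)
    show "integrable lborel (\<lambda>z. r\<^sup>2 * ?f 0 z - (r\<^sup>2 * B) * indicator {c-r..c+r} z)"
      using I0 ind by auto
    show "integrable lborel (\<lambda>z. indicator S z * (z - c)\<^sup>2 * gw m z)"
    proof -
      have "(\<lambda>z. indicator S z * (z - c)\<^sup>2 * gw m z) = (\<lambda>z. (?f 2 z - (2*c) * ?f 1 z) + c\<^sup>2 * ?f 0 z)"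
        by (auto simp: fun_eq_iff power2_eq_square algebra_simps)
      then show ?thesis using I0 I1 I2 by simp
    qed
    show "r\<^sup>2 * ?f 0 z - (r\<^sup>2 * B) * indicator {c-r..c+r} z \<le> indicator S z * (z - c)\<^sup>2 * gw m z" for z
    proof (cases "z \<in> {c-r..c+r}")
      case True
      have "gw m z \<le> B" unfolding B_def by (rule gw_le)
      then have "r\<^sup>2 * ?f 0 z \<le> r\<^sup>2 * B"
        using gw_pos[of m z] by (intro mult_left_mono) (auto simp: indicator_def)
      moreover have "indicator S z * (z - c)\<^sup>2 * gw m z \<ge> 0"
        using gw_pos[of m z] by (simp add: indicator_def)
      ultimately show ?thesis using True by simp
    next
      case False
      then have "\<bar>z - c\<bar> \<ge> r" by auto
      then have "r\<^sup>2 \<le> (z - c)\<^sup>2" using rp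
        by (metis abs_of_pos power2_abs power_mono less_imp_le)
      then have "r\<^sup>2 * ?f 0 z \<le> indicator S z * (z - c)\<^sup>2 * gw m z"
        using gw_pos[of m z] by (auto simp: indicator_def mult_right_mono)
      then show ?thesis using False by simp
    qed
  qed
  moreover have "F2 - 2*c*F1 + c\<^sup>2 * F0 = F2 - F1\<^sup>2 / F0"
    unfolding c_def using F0p by (simp add: power2_eq_square field_simps)
  moreover have "r\<^sup>2 * F0 - r\<^sup>2 * B * (2*r) = F0^3 / (32 * B\<^sup>2)"
    unfolding r_def using Bp by (simp add: power2_eq_square power3_eq_cube field_simps)
  ultimately have "F0^3 / (32 * B\<^sup>2) \<le> F2 - F1\<^sup>2 / F0" by simp
  then have "F0^3 / (32 * B\<^sup>2) / F0 \<le> (F2 - F1\<^sup>2 / F0) / F0"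
    using F0p by (intro divide_right_mono) auto
  moreover have "F0^3 / (32 * B\<^sup>2) / F0 = F0\<^sup>2 / (32 * B\<^sup>2)"
    using F0p by (simp add: power2_eq_square power3_eq_cube field_simps)
  moreover have "(F2 - F1\<^sup>2 / F0) / F0 = F2 / F0 - (F1 / F0)\<^sup>2"
    using F0p by (simp add: power2_eq_square field_simps)
  ultimately show ?thesis unfolding F0_def F1_def F2_def B_def by simp
qed

definition LL :: "real set \<Rightarrow> real \<Rightarrow> real" where "LL S m = ln (FF S 0 m)"
definition L1 :: "real set \<Rightarrow> real \<Rightarrow> real" where "L1 S m = FF S 1 m / FF S 0 m"
definition L2 :: "real set \<Rightarrow> real \<Rightarrow> real" where "L2 S m = FF S 2 m / FF S 0 m - (L1 S m)\<^sup>2"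

lemma DERIV_LL:
  assumes S: "S \<in> sets borel" and pos: "FF S 0 m > 0"
  shows "(LL S has_real_derivative L1 S m) (at m)"
proof -
  have "((\<lambda>x. ln (FF S 0 x)) has_real_derivative (1 / FF S 0 m) * FF S 1 m) (at m)"
    using DERIV_chain2[OF DERIV_ln_divide[OF pos] deriv_FF[OF S, of 0 m]] by simp
  then show ?thesis unfolding LL_def[abs_def] L1_def by simp
qed

lemma DERIV_L1:
  assumes S: "S \<in> sets borel" and pos: "FF S 0 m > 0"
  shows "(L1 S has_real_derivative L2 S m) (at m)"
proof -
  have "((\<lambda>x. FF S 1 x / FF S 0 x) has_real_derivative
     (FF S 2 m * FF S 0 m - FF S 1 m * FF S 1 m) / (FF S 0 m * FF S 0 m)) (at m)"
    using DERIV_divide[OF deriv_FF[OF S, of 1 m] deriv_FF[OF S, of 0 m]] pos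
    by (simp add: numeral_2_eq_2)
  moreover have "(FF S 2 m * FF S 0 m - FF S 1 m * FF S 1 m) / (FF S 0 m * FF S 0 m) = L2 S m"
    unfolding L2_def L1_def using pos by (simp add: power2_eq_square field_simps)
  ultimately show ?thesis unfolding L1_def[abs_def] by simp
qed

lemma FF0_pos_from_surv:
  assumes S: "S \<in> sets borel" and a: "\<alpha> > 0" and sp: "surv_prob S \<mu> \<ge> \<alpha>"
  shows "FF S 0 \<mu> \<ge> sqrt (2*pi) * exp (\<mu>\<^sup>2/2) * \<alpha>"
proof -
  let ?c = "sqrt (2*pi) * exp (\<mu>\<^sup>2/2)"
  have c: "?c > 0" by simp
  have "FF S 0 \<mu> = surv_prob S \<mu> * ?c" using surv_FF[OF S, of \<mu>] c by simp
  then show ?thesis using sp c by (simp add: mult_right_mono mult.commute)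
qed

lemma FF0_pos_all:
  assumes S: "S \<in> sets borel" and a: "\<alpha> > 0" and sp: "surv_prob S \<mu> \<ge> \<alpha>"
  shows "FF S 0 m > 0"
proof -
  have A: "FF S 0 \<mu> > 0" using FF0_pos_from_surv[OF S a sp] a
    by (smt (verit) mult_pos_pos real_sqrt_gt_zero exp_gt_zero pi_gt_zero)
  have "0 < (FF S 0 \<mu>)\<^sup>2 / (sqrt (2*pi) * exp ((2*\<mu> - m)\<^sup>2/2))" using A by simp
  also have "\<dots> \<le> FF S 0 m" by (rule FF0_lower[OF S A])
  finally show ?thesis .
qed

lemma L2_bound:
  assumes S: "S \<in> sets borel" and a: "\<alpha> > 0" and sp: "surv_prob S \<mu> \<ge> \<alpha>"
    and d: "\<bar>m - \<mu>\<bar> \<le> 1"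
  shows "L2 S m \<ge> pi * exp (-2) / 16 * \<alpha> ^ 4"
proof -
  let ?s = "sqrt (2*pi)"
  have s: "?s > 0" by simp
  have A: "FF S 0 \<mu> \<ge> ?s * exp (\<mu>\<^sup>2/2) * \<alpha>" by (rule FF0_pos_from_surv[OF S a sp])
  have Ap: "FF S 0 \<mu> > 0" using A a s
    by (smt (verit) mult_pos_pos exp_gt_zero)
  have pm: "FF S 0 m > 0" by (rule FF0_pos_all[OF S a sp])
  define q where "q = FF S 0 m / exp (m\<^sup>2/2)"
  have "(?s * exp (\<mu>\<^sup>2/2) * \<alpha>)\<^sup>2 \<le> (FF S 0 \<mu>)\<^sup>2"
    using A a s by (intro power_mono) auto
  then have "(?s * exp (\<mu>\<^sup>2/2) * \<alpha>)\<^sup>2 / (?s * exp ((2*\<mu> - m)\<^sup>2/2))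
      \<le> (FF S 0 \<mu>)\<^sup>2 / (?s * exp ((2*\<mu> - m)\<^sup>2/2))"
    by (intro divide_right_mono) auto
  also have "\<dots> \<le> FF S 0 m" by (rule FF0_lower[OF S Ap])
  finally have 1: "(?s * exp (\<mu>\<^sup>2/2) * \<alpha>)\<^sup>2 / (?s * exp ((2*\<mu> - m)\<^sup>2/2)) \<le> FF S 0 m" .
  have "(?s * exp (\<mu>\<^sup>2/2) * \<alpha>)\<^sup>2 / (?s * exp ((2*\<mu> - m)\<^sup>2/2))
      = ?s * \<alpha>\<^sup>2 * (exp (\<mu>\<^sup>2/2) * exp (\<mu>\<^sup>2/2) / exp ((2*\<mu> - m)\<^sup>2/2))"
    using s by (simp add: power2_eq_square field_simps)
  also have "exp (\<mu>\<^sup>2/2) * exp (\<mu>\<^sup>2/2) / exp ((2*\<mu> - m)\<^sup>2/2) = exp (\<mu>\<^sup>2/2 + \<mu>\<^sup>2/2 - (2*\<mu> - m)\<^sup>2/2)"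
    by (simp only: exp_add exp_diff)
  finally have 2: "?s * \<alpha>\<^sup>2 * exp (\<mu>\<^sup>2/2 + \<mu>\<^sup>2/2 - (2*\<mu> - m)\<^sup>2/2) \<le> FF S 0 m" using 1 by simp
  have 3: "?s * \<alpha>\<^sup>2 * exp (-1) \<le> q"
  proof -
    let ?E = "\<mu>\<^sup>2/2 + \<mu>\<^sup>2/2 - (2*\<mu> - m)\<^sup>2/2"
    have i3: "?E - m\<^sup>2/2 = - (m - \<mu>)\<^sup>2"
      by (simp add: power2_eq_square field_simps)
    have "(m - \<mu>)\<^sup>2 \<le> 1"
    proof -
      have "\<bar>m - \<mu>\<bar>\<^sup>2 \<le> 1\<^sup>2" using d by (intro power_mono) auto
      then show ?thesis by simp
    qed
    then have "?s * \<alpha>\<^sup>2 * exp (-1) \<le> ?s * \<alpha>\<^sup>2 * exp (- (m - \<mu>)\<^sup>2)"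
      using s a by (intro mult_left_mono) auto
    also have "\<dots> = ?s * \<alpha>\<^sup>2 * exp (?E - m\<^sup>2/2)" by (simp only: i3)
    also have "\<dots> = ?s * \<alpha>\<^sup>2 * exp ?E / exp (m\<^sup>2/2)" by (simp only: exp_diff) simp
    also have "\<dots> \<le> q"
      unfolding q_def using 2 by (intro divide_right_mono) auto
    finally show ?thesis .
  qed
  have L2q: "L2 S m \<ge> (FF S 0 m)\<^sup>2 / (32 * (exp (m\<^sup>2/2))\<^sup>2)"
    using var_lower[OF S pm] unfolding L2_def L1_def .
  have qq: "(FF S 0 m)\<^sup>2 / (32 * (exp (m\<^sup>2/2))\<^sup>2) = q\<^sup>2 / 32"
    unfolding q_def by (simp add: power_divide)
  have q3: "(?s * \<alpha>\<^sup>2 * exp (-1))\<^sup>2 \<le> q\<^sup>2"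
    using 3 s a by (intro power_mono) auto
  have q4: "(?s * \<alpha>\<^sup>2 * exp (-1))\<^sup>2 = 2 * pi * \<alpha>^4 * exp (-2)"
  proof -
    have "(?s * \<alpha>\<^sup>2 * exp (-1))\<^sup>2 = ?s\<^sup>2 * \<alpha>^4 * (exp (-1))\<^sup>2" by (simp add: power_mult_distrib power_mult[symmetric])
    also have "(exp (-1::real))\<^sup>2 = exp (-2)" by (simp add: power2_eq_square mult_exp_exp)
    finally show ?thesis by simp
  qed
  have A: "q\<^sup>2 / 32 \<le> L2 S m" using L2q qq by simp
  have B: "2 * pi * \<alpha>^4 * exp (-2) \<le> q\<^sup>2" using q3 q4 by simp
  have "L2 S m \<ge> (2 * pi * \<alpha>^4 * exp (-2)) / 32"
    using A B by linarith
  moreover have "(2 * pi * \<alpha>^4 * exp (-2)) / 32 = pi * exp (-2) / 16 * \<alpha> ^ 4" by simp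
  ultimately show ?thesis by linarith
qed

lemma Kidx_in: assumes "finite K" "p < card K" shows "Kidx K p \<in> K"
  using assms unfolding Kidx_def
  by (metis length_sorted_list_of_set nth_mem set_sorted_list_of_set)

lemma sum_Kidx: assumes "finite K" shows "(\<Sum>p<card K. f (Kidx K p)) = (\<Sum>j\<in>K. f j)"
proof -
  let ?xs = "sorted_list_of_set K"
  have "(\<Sum>j\<in>K. f j) = sum_list (map f ?xs)"
    using assms by (simp add: sum_list_distinct_conv_sum_set)
  also have "\<dots> = (\<Sum>i = 0..<length (map f ?xs). map f ?xs ! i)" by (rule sum_list_sum_nth)
  also have "\<dots> = (\<Sum>p<card K. f (Kidx K p))"
    using assms by (simp add: Kidx_def atLeast0LessThan)
  finally show ?thesis by simp
qed

definition aa :: "nat set \<Rightarrow> (nat \<Rightarrow> nat \<Rightarrow> real) \<Rightarrow> (nat \<Rightarrow> real) \<Rightarrow> nat \<Rightarrow> real" where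
  "aa K X \<omega> i = (\<Sum>p<card K. X i (Kidx K p) * \<omega> p)"

lemma row_ext:
  assumes K: "K \<subseteq> {..<d}"
  shows "row_ip X d i (extK K \<omega>) = aa K X \<omega> i"
proof -
  have fin: "finite K" using K finite_subset by blast
  have "row_ip X d i (extK K \<omega>) = (\<Sum>j<d. \<Sum>p<card K. if Kidx K p = j then X i j * \<omega> p else 0)"
    unfolding row_ip_def extK_def by (simp add: sum_distrib_left if_distrib cong: if_cong)
  also have "\<dots> = (\<Sum>p<card K. \<Sum>j<d. if Kidx K p = j then X i j * \<omega> p else 0)"
    by (rule sum.swap)
  also have "\<dots> = (\<Sum>p<card K. X i (Kidx K p) * \<omega> p)"
  proof (rule sum.cong[OF refl])
    fix p assume "p \<in> {..<card K}"
    then have "Kidx K p \<in> {..<d}" using Kidx_in[OF fin] K by auto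
    then show "(\<Sum>j<d. if Kidx K p = j then X i j * \<omega> p else 0) = X i (Kidx K p) * \<omega> p"
      by (simp add: sum.delta)
  qed
  finally show ?thesis unfolding aa_def .
qed

lemma row_Omega:
  assumes K: "K \<subseteq> {..<d}" and supp: "{j. j < d \<and> \<Omega>s j \<noteq> 0} = K"
  shows "row_ip X d i \<Omega>s = (\<Sum>p<card K. X i (Kidx K p) * \<Omega>s (Kidx K p))"
proof -
  have fin: "finite K" using K finite_subset by blast
  have "row_ip X d i \<Omega>s = (\<Sum>j\<in>K. X i j * \<Omega>s j)"
    unfolding row_ip_def
    by (rule sum.mono_neutral_right) (use K supp in auto)
  also have "\<dots> = (\<Sum>p<card K. X i (Kidx K p) * \<Omega>s (Kidx K p))"
    by (rule sum_Kidx[OF fin, symmetric])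
  finally show ?thesis .
qed

lemma trunc_eq:
  assumes K: "K \<subseteq> {..<d}"
  shows "trunc_nll_K S n d K X y \<omega> =
     (1 / real n) * (\<Sum>i<n. (1/2) * (y i)\<^sup>2 - y i * aa K X \<omega> i + LL S (aa K X \<omega> i))"
  unfolding trunc_nll_K_def trunc_nll_def row_ext[OF K] LL_def FF0 gw_def ..

lemma aa_upd:
  assumes "p < card K"
  shows "aa K X (u(p := t)) i = aa K X u i + X i (Kidx K p) * (t - u p)"
proof -
  have "aa K X (u(p := t)) i = (\<Sum>q<card K. X i (Kidx K q) * u q + (if q = p then X i (Kidx K p) * (t - u p) else 0))"
    unfolding aa_def by (intro sum.cong) (auto simp: algebra_simps)
  also have "\<dots> = aa K X u i + X i (Kidx K p) * (t - u p)"
    using assms by (simp add: sum.distrib aa_def)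
  finally show ?thesis .
qed

lemma DERIV_LL_chain:
  assumes S: "S \<in> sets borel" and pos: "\<And>m. FF S 0 m > 0"
    and f: "(f has_real_derivative D) (at x)"
  shows "((\<lambda>x. LL S (f x)) has_real_derivative L1 S (f x) * D) (at x)"
  by (rule DERIV_chain2[OF DERIV_LL[OF S pos] f])

lemma DERIV_L1_chain:
  assumes S: "S \<in> sets borel" and pos: "\<And>m. FF S 0 m > 0"
    and f: "(f has_real_derivative D) (at x)"
  shows "((\<lambda>x. L1 S (f x)) has_real_derivative L2 S (f x) * D) (at x)"
  by (rule DERIV_chain2[OF DERIV_L1[OF S pos] f])

lemma dist_bound:
  fixes C :: real
  assumes XC: "\<forall>p<k. \<bar>xx p\<bar> \<le> C"
    and rad: "sqrt (\<Sum>p<k. (\<delta> p)\<^sup>2) \<le> 1 / (C * sqrt (real k))"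
  shows "\<bar>\<Sum>p<k. xx p * \<delta> p\<bar> \<le> 1"
proof (cases "k = 0")
  case True then show ?thesis by simp
next
  case False
  then have C0: "C \<ge> 0" using XC by (meson abs_ge_zero gr0I order_trans)
  have "\<bar>\<Sum>p<k. xx p * \<delta> p\<bar> \<le> (\<Sum>p<k. \<bar>xx p * \<delta> p\<bar>)" by (rule sum_abs)
  also have "\<dots> \<le> (\<Sum>p<k. C * \<bar>\<delta> p\<bar>)"
    using XC by (intro sum_mono) (auto simp: abs_mult intro: mult_right_mono)
  also have "\<dots> = C * (\<Sum>p<k. \<bar>\<delta> p\<bar>)" by (simp add: sum_distrib_left)
  also have "\<dots> \<le> 1"
  proof (cases "C = 0")
    case True then show ?thesis by simp
  next
    case False
    then have Cp: "C > 0" using C0 by simp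
    have kp: "sqrt (real k) > 0" using \<open>k \<noteq> 0\<close> by simp
    have "(\<Sum>p<k. \<bar>\<delta> p\<bar>)\<^sup>2 \<le> (\<Sum>p<k. \<bar>\<delta> p\<bar>\<^sup>2) * real (card {..<k})"
      by (rule sum_squared_le_sum_of_squares)
    then have "(\<Sum>p<k. \<bar>\<delta> p\<bar>) \<le> sqrt ((\<Sum>p<k. (\<delta> p)\<^sup>2) * real k)"
      by (intro real_le_rsqrt) simp
    also have "\<dots> = sqrt (\<Sum>p<k. (\<delta> p)\<^sup>2) * sqrt (real k)" by (simp add: real_sqrt_mult)
    also have "\<dots> \<le> 1 / (C * sqrt (real k)) * sqrt (real k)"
      using rad kp by (intro mult_right_mono) auto
    also have "\<dots> = 1 / C" using kp by simp
    finally have "(\<Sum>p<k. \<bar>\<delta> p\<bar>) \<le> 1 / C" .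
    then have "C * (\<Sum>p<k. \<bar>\<delta> p\<bar>) \<le> C * (1 / C)" using Cp by (intro mult_left_mono) auto
    then show ?thesis using Cp by simp
  qed
  finally show ?thesis .
qed

lemma quad_id:
  fixes L :: "nat \<Rightarrow> real" and x :: "nat \<Rightarrow> nat \<Rightarrow> real"
  shows "(\<Sum>p<k. \<Sum>q<k. v p * ((1 / real n) * (\<Sum>i<n. L i * x i q * x i p)) * v q)
     = (1 / real n) * (\<Sum>i<n. L i * (\<Sum>p<k. x i p * v p)\<^sup>2)"
proof -
  have "(1 / real n) * (\<Sum>i<n. L i * (\<Sum>p<k. x i p * v p)\<^sup>2)
      = (\<Sum>i<n. \<Sum>p<k. \<Sum>q<k. (1 / real n) * L i * x i p * v p * x i q * v q)"
    by (simp add: power2_eq_square sum_product sum_distrib_left mult_ac)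
  also have "\<dots> = (\<Sum>p<k. \<Sum>i<n. \<Sum>q<k. (1 / real n) * L i * x i p * v p * x i q * v q)"
    by (rule sum.swap)
  also have "\<dots> = (\<Sum>p<k. \<Sum>q<k. \<Sum>i<n. (1 / real n) * L i * x i p * v p * x i q * v q)"
    by (rule sum.cong[OF refl], rule sum.swap)
  also have "\<dots> = (\<Sum>p<k. \<Sum>q<k. v p * ((1 / real n) * (\<Sum>i<n. L i * x i q * x i p)) * v q)"
    by (simp add: sum_distrib_left sum_distrib_right mult_ac)
  finally show ?thesis by simp
qed

theorem lemma13:
  shows "\<exists>c>0. \<forall>(n::nat) (d::nat) (K::nat set) (X::nat \<Rightarrow> nat \<Rightarrow> real) (\<Omega>s::nat \<Rightarrow> real)
            (S::real set) (y::nat \<Rightarrow> real) (\<alpha>::real) (\<sigma>min::real) (C::real).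
     n \<ge> 1 \<and> K \<subseteq> {..<d} \<and> {j. j < d \<and> \<Omega>s j \<noteq> 0} = K \<and> S \<in> sets lborel
     \<and> \<alpha> > 0 \<and> (\<forall>i<n. surv_prob S (row_ip X d i \<Omega>s) \<ge> \<alpha>)
     \<and> \<sigma>min > 0 \<and> (\<forall>v::nat \<Rightarrow> real.
           (1 / real n) * (\<Sum>i<n. (\<Sum>j<card K. X i (Kidx K j) * v j)\<^sup>2)
             \<ge> \<sigma>min * (\<Sum>j<card K. (v j)\<^sup>2))
     \<and> (\<forall>i<n. \<forall>j<d. \<bar>X i j\<bar> \<le> C)
     \<longrightarrow> (\<exists>\<kappa>. \<kappa> \<ge> c * \<alpha> ^ 4 * \<sigma>min \<and> \<kappa> > 0 \<and>
           (\<forall>\<omega>::nat \<Rightarrow> real.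
              sqrt (\<Sum>j<card K. (\<omega> j - \<Omega>s (Kidx K j))\<^sup>2) \<le> 1 / (C * sqrt (real (card K)))
              \<longrightarrow> (\<exists>H. is_hessian (trunc_nll_K S n d K X y) (card K) \<omega> H \<and>
                    (\<forall>v::nat \<Rightarrow> real. (\<Sum>i<card K. \<Sum>j<card K. v i * H i j * v j)
                        \<ge> \<kappa> * (\<Sum>j<card K. (v j)\<^sup>2)))))"
proof (rule exI[of _ "pi * exp (-2) / 16"], intro conjI allI impI)
  show "pi * exp (-2) / 16 > (0::real)" by simp
  fix n d :: nat and K :: "nat set" and X :: "nat \<Rightarrow> nat \<Rightarrow> real" and \<Omega>s :: "nat \<Rightarrow> real"
    and S :: "real set" and y :: "nat \<Rightarrow> real" and \<alpha> \<sigma>min C :: real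
  let ?c = "pi * exp (-2) / 16 :: real"
  let ?k = "card K"
  assume hyp: "n \<ge> 1 \<and> K \<subseteq> {..<d} \<and> {j. j < d \<and> \<Omega>s j \<noteq> 0} = K \<and> S \<in> sets lborel
     \<and> \<alpha> > 0 \<and> (\<forall>i<n. surv_prob S (row_ip X d i \<Omega>s) \<ge> \<alpha>)
     \<and> \<sigma>min > 0 \<and> (\<forall>v::nat \<Rightarrow> real.
           (1 / real n) * (\<Sum>i<n. (\<Sum>j<card K. X i (Kidx K j) * v j)\<^sup>2)
             \<ge> \<sigma>min * (\<Sum>j<card K. (v j)\<^sup>2))
     \<and> (\<forall>i<n. \<forall>j<d. \<bar>X i j\<bar> \<le> C)"
  then have n1: "n \<ge> 1" and K: "K \<subseteq> {..<d}" and supp: "{j. j < d \<and> \<Omega>s j \<noteq> 0} = K"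
    and S0: "S \<in> sets lborel" and a: "\<alpha> > 0" and sp: "\<forall>i<n. surv_prob S (row_ip X d i \<Omega>s) \<ge> \<alpha>"
    and sig: "\<sigma>min > 0"
    and eig: "\<forall>v::nat \<Rightarrow> real. (1 / real n) * (\<Sum>i<n. (\<Sum>j<card K. X i (Kidx K j) * v j)\<^sup>2)
             \<ge> \<sigma>min * (\<Sum>j<card K. (v j)\<^sup>2)"
    and XC: "\<forall>i<n. \<forall>j<d. \<bar>X i j\<bar> \<le> C"
    by blast+
  have S: "S \<in> sets borel" using S0 by simp
  have fin: "finite K" using K finite_subset by blast
  have pos: "\<And>m. FF S 0 m > 0"
    using FF0_pos_all[OF S a, of "row_ip X d 0 \<Omega>s"] sp n1 by auto
  define \<kappa> where "\<kappa> = ?c * \<alpha> ^ 4 * \<sigma>min"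
  have c0: "?c > 0" by simp
  have ca0: "?c * \<alpha> ^ 4 > 0" using a by simp
  show "\<exists>\<kappa>. \<kappa> \<ge> ?c * \<alpha> ^ 4 * \<sigma>min \<and> \<kappa> > 0 \<and>
           (\<forall>\<omega>::nat \<Rightarrow> real.
              sqrt (\<Sum>j<card K. (\<omega> j - \<Omega>s (Kidx K j))\<^sup>2) \<le> 1 / (C * sqrt (real (card K)))
              \<longrightarrow> (\<exists>H. is_hessian (trunc_nll_K S n d K X y) (card K) \<omega> H \<and>
                    (\<forall>v::nat \<Rightarrow> real. (\<Sum>i<card K. \<Sum>j<card K. v i * H i j * v j)
                        \<ge> \<kappa> * (\<Sum>j<card K. (v j)\<^sup>2))))"
  proof (rule exI[of _ \<kappa>], intro conjI allI impI)
    show "\<kappa> \<ge> ?c * \<alpha> ^ 4 * \<sigma>min" unfolding \<kappa>_def by simp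
    show "\<kappa> > 0" unfolding \<kappa>_def using ca0 sig by simp
    fix \<omega> :: "nat \<Rightarrow> real"
    assume rad: "sqrt (\<Sum>j<card K. (\<omega> j - \<Omega>s (Kidx K j))\<^sup>2) \<le> 1 / (C * sqrt (real (card K)))"
    define x where "x i p = X i (Kidx K p)" for i p
    define g where "g p u = (1 / real n) * (\<Sum>i<n. - y i * x i p + L1 S (aa K X u i) * x i p)" for p u
    define H where "H p q = (1 / real n) * (\<Sum>i<n. L2 S (aa K X \<omega> i) * x i q * x i p)" for p q
    have hess: "is_hessian (trunc_nll_K S n d K X y) (card K) \<omega> H"
      unfolding is_hessian_def
    proof (intro exI[of _ g] conjI allI impI)
      fix u p assume p: "p < card K"
      show "has_partial (trunc_nll_K S n d K X y) p u (g p u)"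
        unfolding has_partial_def trunc_eq[OF K] aa_upd[OF p]
        by (auto intro!: derivative_eq_intros DERIV_LL_chain[OF S pos] simp: g_def x_def sum_distrib_left algebra_simps)
    next
      fix p q assume p: "p < card K" and q: "q < card K"
      show "has_partial (g p) q \<omega> (H p q)"
        unfolding has_partial_def g_def aa_upd[OF q]
        by (auto intro!: derivative_eq_intros DERIV_L1_chain[OF S pos] simp: H_def x_def sum_distrib_left algebra_simps)
    qed
    have L2b: "L2 S (aa K X \<omega> i) \<ge> ?c * \<alpha> ^ 4" if i: "i < n" for i
    proof -
      let ?\<mu> = "row_ip X d i \<Omega>s"
      have "aa K X \<omega> i - ?\<mu> = (\<Sum>p<card K. x i p * (\<omega> p - \<Omega>s (Kidx K p)))"
        unfolding aa_def row_Omega[OF K supp] x_def by (simp add: sum_subtractf algebra_simps)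
      also have "\<bar>\<dots>\<bar> \<le> 1"
      proof (rule dist_bound[where C=C])
        show "\<forall>p<card K. \<bar>x i p\<bar> \<le> C"
          using XC i Kidx_in[OF fin] K unfolding x_def by blast
        show "sqrt (\<Sum>p<card K. (\<omega> p - \<Omega>s (Kidx K p))\<^sup>2) \<le> 1 / (C * sqrt (real (card K)))"
          by (rule rad)
      qed
      finally have d: "\<bar>aa K X \<omega> i - ?\<mu>\<bar> \<le> 1" .
      show ?thesis using L2_bound[OF S a _ d] sp i by auto
    qed
    show "\<exists>H. is_hessian (trunc_nll_K S n d K X y) (card K) \<omega> H \<and>
                    (\<forall>v::nat \<Rightarrow> real. (\<Sum>i<card K. \<Sum>j<card K. v i * H i j * v j)
                        \<ge> \<kappa> * (\<Sum>j<card K. (v j)\<^sup>2))"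
    proof (rule exI[of _ H], intro conjI allI)
      show "is_hessian (trunc_nll_K S n d K X y) (card K) \<omega> H" by (rule hess)
      fix v :: "nat \<Rightarrow> real"
      have "(\<Sum>i<card K. \<Sum>j<card K. v i * H i j * v j)
          = (1 / real n) * (\<Sum>i<n. L2 S (aa K X \<omega> i) * (\<Sum>p<card K. x i p * v p)\<^sup>2)"
        unfolding H_def by (rule quad_id)
      also have "\<dots> \<ge> (1 / real n) * (\<Sum>i<n. (?c * \<alpha> ^ 4) * (\<Sum>p<card K. x i p * v p)\<^sup>2)"
        using L2b by (intro mult_left_mono sum_mono mult_right_mono) auto
      moreover have "(1 / real n) * (\<Sum>i<n. (?c * \<alpha> ^ 4) * (\<Sum>p<card K. x i p * v p)\<^sup>2)
          = (?c * \<alpha> ^ 4) * ((1 / real n) * (\<Sum>i<n. (\<Sum>p<card K. x i p * v p)\<^sup>2))"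
        by (simp add: sum_distrib_left mult_ac)
      moreover have "(?c * \<alpha> ^ 4) * ((1 / real n) * (\<Sum>i<n. (\<Sum>p<card K. x i p * v p)\<^sup>2))
          \<ge> (?c * \<alpha> ^ 4) * (\<sigma>min * (\<Sum>j<card K. (v j)\<^sup>2))"
        using eig ca0 unfolding x_def by (intro mult_left_mono) auto
      ultimately show "(\<Sum>i<card K. \<Sum>j<card K. v i * H i j * v j) \<ge> \<kappa> * (\<Sum>j<card K. (v j)\<^sup>2)"
        unfolding \<kappa>_def by (simp add: mult_ac)
    qed
  qed
qed

end
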